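(* Let $\mathcal R$ be a self-complemented reconstruction function outputting sc-voters of size at most $\lambda$, with $\lambda<m$. For any distribution $D$ on $\mathcal X\times\{-1,1\}$, any prior $P$ on $\mathcal I_\lambda\times\Sigma_\lambda$ and any $\delta\in(0,1]$, with probability at least $1-\delta$ over $S\sim D^m$, for all posteriors $Q$ aligned on $P$, $$R_D(G_{Q,S})\ \le\ R_S(G_{Q,S})+\sqrt{\frac1{2(m-\lambda)}\Big[4\lambda+\ln\frac{\xi(m-\lambda)}{\delta}\Big]}.$$
   Context: $S=((x_i,y_i))_{i=1}^m$; $\mathcal I_\lambda$ is the set of index sequences $(i_1,\dots,i_k)$, $0\le k\le\lambda$, $i_j\in\{1,\dots,m\}$; $\Sigma_\lambda=\{-1,1\}^\lambda$; $S_{\mathbf i}$ the subsequence of $S$ indexed by $\mathbf i$. A reconstruction function $\mathcal R$ maps $(S_{\mathbf i},\boldsymbol\sigma)$ to a voter $\mathcal X\to[-1,1]$ depending only on $S_{\mathbf i},\boldsymbol\sigma$; it is self-complemented if $\mathcal R(S_{\mathbf i},-\boldsymbol\sigma)=-\mathcal R(S_{\mathbf i},\boldsymbol\sigma)$ for all $S$, $\mathbf i$, $\boldsymbol\sigma$. $Q$ on $\mathcal I_\lambda\times\Sigma_\lambda$ is aligned on $P$ if $Q(\mathbf i,\boldsymbol\sigma)+Q(\mathbf i,-\boldsymbol\sigma)=P(\mathbf i,\boldsymbol\sigma)+P(\mathbf i,-\boldsymbol\sigma)$ for all $(\mathbf i,\boldsymbol\sigma)$. $P$ is fixed before seeing $S$.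 $R_{D'}(G_{Q,S})=\mathbb E_{(\mathbf i,\boldsymbol\sigma)\sim Q}\mathbb E_{(x,y)\sim D'}\tfrac12(1-y\,\mathcal R(S_{\mathbf i},\boldsymbol\sigma)(x))$ for $D'\in\{D,S\}$. $\xi(n)=\sum_{k=0}^n\binom nk(k/n)^k(1-k/n)^{n-k}$. *)

theory Defs
  imports "HOL-Probability.Probability"
begin

text \<open>Index sequences (0-based indices into the sample S = S 0, ..., S (m-1)) of length at most lam.\<close>
definition idx_seqs :: "nat \<Rightarrow> nat \<Rightarrow> nat list set" where
  "idx_seqs m lam = {is. length is \<le> lam \<and> set is \<subseteq> {..<m}}"

definition msgs :: "nat \<Rightarrow> int list set" where
  "msgs lam = {s. length s = lam \<and> set s \<subseteq> {-1, 1}}"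

text \<open>Reconstruction function: takes the compression subsequence and the message, returns a voter.\<close>
definition self_complemented :: "(('x \<times> real) list \<Rightarrow> int list \<Rightarrow> 'x \<Rightarrow> real) \<Rightarrow> bool" where
  "self_complemented R \<longleftrightarrow> (\<forall>L \<sigma>. R L (map uminus \<sigma>) = (\<lambda>x. - R L \<sigma> x))"

definition aligned :: "(nat list \<times> int list) pmf \<Rightarrow> (nat list \<times> int list) pmf \<Rightarrow> bool" where
  "aligned Q P \<longleftrightarrow> (\<forall>i \<sigma>. pmf Q (i, \<sigma>) + pmf Q (i, map uminus \<sigma>) = pmf P (i, \<sigma>) + pmf P (i, map uminus \<sigma>))"

definition xi :: "nat \<Rightarrow> real" where
  "xi n = (\<Sum>k = 0..n. real (n choose k) * (real k / real n) ^ k * (1 - real k / real n) ^ (n - k))"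

definition risk_D :: "('x \<times> real) measure \<Rightarrow> (('x \<times> real) list \<Rightarrow> int list \<Rightarrow> 'x \<Rightarrow> real)
    \<Rightarrow> (nat list \<times> int list) pmf \<Rightarrow> (nat \<Rightarrow> 'x \<times> real) \<Rightarrow> real" where
  "risk_D D R Q S = measure_pmf.expectation Q
     (\<lambda>(i, \<sigma>). \<integral>z. (1 - snd z * R (map S i) \<sigma> (fst z)) / 2 \<partial>D)"

definition risk_S :: "nat \<Rightarrow> (('x \<times> real) list \<Rightarrow> int list \<Rightarrow> 'x \<Rightarrow> real)
    \<Rightarrow> (nat list \<times> int list) pmf \<Rightarrow> (nat \<Rightarrow> 'x \<times> real) \<Rightarrow> real" where
  "risk_S m R Q S = measure_pmf.expectation Q
     (\<lambda>(i, \<sigma>). (\<Sum>j<m. (1 - snd (S j) * R (map S i) \<sigma> (fst (S j))) / 2) / real m)"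

end

theory Submission imports Defs begin
lemma binom_rec:
  fixes \<phi> :: "nat \<Rightarrow> real"
  assumes p: "p \<in> {0..1}"
  shows "measure_pmf.expectation (binomial_pmf (Suc n) p) \<phi> =
     (1-p) * measure_pmf.expectation (binomial_pmf n p) \<phi> + p * measure_pmf.expectation (binomial_pmf n p) (\<lambda>k. \<phi> (Suc k))"
proof -
  have "measure_pmf.expectation (binomial_pmf (Suc n) p) \<phi> =
     (\<Sum>b\<in>UNIV. pmf (bernoulli_pmf p) b *\<^sub>R measure_pmf.expectation (binomial_pmf n p \<bind> (\<lambda>k. return_pmf ((if b then 1 else 0) + k))) \<phi>)"
    unfolding binomial_pmf_Suc[OF p]
    by (rule pmf_expectation_bind) (use p in \<open>auto intro!: finite_set_pmf_binomial_pmf\<close>)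
  also have "\<dots> = (1-p) * measure_pmf.expectation (binomial_pmf n p) \<phi> + p * measure_pmf.expectation (binomial_pmf n p) (\<lambda>k. \<phi> (Suc k))"
  proof -
    have e: "measure_pmf.expectation (binomial_pmf n p \<bind> (\<lambda>k. return_pmf (c + k))) \<phi> =
          measure_pmf.expectation (binomial_pmf n p) (\<lambda>k. \<phi> (c + k))" for c
      by (subst pmf_expectation_bind[where A="{..n}"]) (use p in \<open>auto simp: expectation_binomial_pmf' set_pmf_binomial_eq\<close>)
    show ?thesis using p by (simp add: UNIV_bool e)
  qed
  finally show ?thesis .
qed

lemma inner_step:
  assumes D: "prob_space D" and g[measurable]: "g \<in> borel_measurable D"
    and g01: "\<And>z. z \<in> space D \<Longrightarrow> 0 \<le> g z \<and> g z \<le> 1"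
    and f0: "\<And>s. 0 \<le> f s"
    and fc: "\<And>s u. 0 \<le> u \<Longrightarrow> u \<le> 1 \<Longrightarrow> f (s+u) \<le> (1-u) * f s + u * f (s+1)"
  shows "(\<integral>\<^sup>+y. ennreal (f (g y + s)) \<partial>D) \<le> ennreal ((1 - integral\<^sup>L D g) * f s + integral\<^sup>L D g * f (s+1))"
proof -
  interpret prob_space D by (fact D)
  have ig: "integrable D g"
    by (rule integrable_const_bound[where B=1]) (use g01 in auto)
  have "(\<integral>\<^sup>+y. ennreal (f (g y + s)) \<partial>D) \<le> (\<integral>\<^sup>+y. ennreal ((1 - g y) * f s + g y * f (s+1)) \<partial>D)"
  proof (rule nn_integral_mono)
    fix y assume "y \<in> space D"
    with g01 fc[of "g y" s] show "ennreal (f (g y + s)) \<le> ennreal ((1 - g y) * f s + g y * f (s+1))"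
      by (auto simp add: add.commute intro!: ennreal_leI)
  qed
  also have "\<dots> = ennreal (\<integral>y. (1 - g y) * f s + g y * f (s+1) \<partial>D)"
  proof (rule nn_integral_eq_integral)
    show "integrable D (\<lambda>y. (1 - g y) * f s + g y * f (s+1))"
      using ig by (auto intro!: integrable_add integrable_mult_left integrable_mult_right integrable_diff)
    show "AE y in D. 0 \<le> (1 - g y) * f s + g y * f (s+1)"
      using g01 f0 by (intro AE_I2) (auto intro!: add_nonneg_nonneg mult_nonneg_nonneg)
  qed
  also have "(\<integral>y. (1 - g y) * f s + g y * f (s+1) \<partial>D) = (1 - integral\<^sup>L D g) * f s + integral\<^sup>L D g * f (s+1)"
    using ig by (simp add: integral_add integral_diff algebra_simps prob_space)
  finally show ?thesis .
qed

lemma enn_lin: "0\<le>a \<Longrightarrow> 0\<le>b \<Longrightarrow> 0\<le>c \<Longrightarrow> 0\<le>d \<Longrightarrow> ennreal (a*b + c*d) = ennreal a * ennreal b + ennreal c * ennreal d"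
  by (simp add: ennreal_plus ennreal_mult)

lemma maurer:
  assumes D: "prob_space D" and g[measurable]: "g \<in> borel_measurable D"
    and g01: "\<And>z. z \<in> space D \<Longrightarrow> 0 \<le> g z \<and> g z \<le> 1"
    and fin: "finite T"
    and fm: "f \<in> borel_measurable borel"
    and f0: "\<And>s. 0 \<le> f s"
    and fc: "\<And>s u. 0 \<le> u \<Longrightarrow> u \<le> 1 \<Longrightarrow> f (s+u) \<le> (1-u) * f s + u * f (s+1)"
  shows "(\<integral>\<^sup>+y. ennreal (f (\<Sum>j\<in>T. g (y j))) \<partial>PiM T (\<lambda>_. D))
           \<le> ennreal (measure_pmf.expectation (binomial_pmf (card T) (integral\<^sup>L D g)) (\<lambda>k. f (real k)))"
  using fin fm f0 fc
proof (induction T arbitrary: f rule: finite_induct)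
  interpret prob_space D by (fact D)
  have ig: "integrable D g"
    by (rule integrable_const_bound[where B=1]) (use g01 in auto)
  have p: "integral\<^sup>L D g \<in> {0..1}"
    using g01 ig by (auto intro!: integral_ge_const integral_le_const AE_I2)
  {
  case empty
  interpret E: prob_space "PiM {} (\<lambda>_. D)" by (rule prob_space_PiM) (rule D)
  show ?case using p by (simp add: E.emeasure_space_1 binomial_pmf_0)
next
  case (insert t T)
  interpret PS: product_sigma_finite "\<lambda>_. D"
    by (simp add: product_sigma_finite_def prob_space_imp_sigma_finite D)
  interpret PT: prob_space "PiM T (\<lambda>_. D)" by (rule prob_space_PiM) (rule D)
  note fmi[measurable] = insert.prems(1)
  define p where "p = integral\<^sup>L D g"
  have "(\<integral>\<^sup>+y. ennreal (f (\<Sum>j\<in>insert t T. g (y j))) \<partial>PiM (insert t T) (\<lambda>_. D))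
      = (\<integral>\<^sup>+x. (\<integral>\<^sup>+y. ennreal (f (\<Sum>j\<in>insert t T. g ((x(t:=y)) j))) \<partial>D) \<partial>PiM T (\<lambda>_. D))"
    by (rule PS.product_nn_integral_insert) (use insert in auto)
  also have "\<dots> = (\<integral>\<^sup>+x. (\<integral>\<^sup>+y. ennreal (f (g y + (\<Sum>j\<in>T. g (x j)))) \<partial>D) \<partial>PiM T (\<lambda>_. D))"
  proof (intro nn_integral_cong)
    fix x y
    have "(\<Sum>j\<in>T. g ((x(t:=y)) j)) = (\<Sum>j\<in>T. g (x j))"
      using insert(2) by (intro sum.cong) auto
    then show "ennreal (f (\<Sum>j\<in>insert t T. g ((x(t:=y)) j))) = ennreal (f (g y + (\<Sum>j\<in>T. g (x j))))"
      using insert(1,2) by simp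
  qed
  also have "\<dots> \<le> (\<integral>\<^sup>+x. ennreal ((1 - p) * f (\<Sum>j\<in>T. g (x j)) + p * f ((\<Sum>j\<in>T. g (x j)) + 1)) \<partial>PiM T (\<lambda>_. D))"
    unfolding p_def
    by (intro nn_integral_mono inner_step[OF D g g01]) (use insert in auto)
  also have "\<dots> = ennreal (1 - p) * (\<integral>\<^sup>+x. ennreal (f (\<Sum>j\<in>T. g (x j))) \<partial>PiM T (\<lambda>_. D))
       + ennreal p * (\<integral>\<^sup>+x. ennreal ((\<lambda>s. f (s + 1)) (\<Sum>j\<in>T. g (x j))) \<partial>PiM T (\<lambda>_. D))"
  proof -
    have "(\<integral>\<^sup>+x. ennreal ((1 - p) * f (\<Sum>j\<in>T. g (x j)) + p * f ((\<Sum>j\<in>T. g (x j)) + 1)) \<partial>PiM T (\<lambda>_. D))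
        = (\<integral>\<^sup>+x. ennreal (1 - p) * ennreal (f (\<Sum>j\<in>T. g (x j))) + ennreal p * ennreal (f ((\<Sum>j\<in>T. g (x j)) + 1)) \<partial>PiM T (\<lambda>_. D))"
      using p insert.prems(2) unfolding p_def
      by (intro nn_integral_cong enn_lin) auto
    also have "\<dots> = ennreal (1 - p) * (\<integral>\<^sup>+x. ennreal (f (\<Sum>j\<in>T. g (x j))) \<partial>PiM T (\<lambda>_. D))
       + ennreal p * (\<integral>\<^sup>+x. ennreal (f ((\<Sum>j\<in>T. g (x j)) + 1)) \<partial>PiM T (\<lambda>_. D))"
      by (subst nn_integral_add) (measurable, measurable, simp add: nn_integral_cmult)
    finally show ?thesis by simp
  qed
  also have "\<dots> \<le> ennreal (1 - p) * ennreal (measure_pmf.expectation (binomial_pmf (card T) p) (\<lambda>k. f (real k)))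
       + ennreal p * ennreal (measure_pmf.expectation (binomial_pmf (card T) p) (\<lambda>k. (\<lambda>s. f (s + 1)) (real k)))"
  proof (intro add_mono mult_left_mono)
    show "(\<integral>\<^sup>+x. ennreal (f (\<Sum>j\<in>T. g (x j))) \<partial>PiM T (\<lambda>_. D))
        \<le> ennreal (measure_pmf.expectation (binomial_pmf (card T) p) (\<lambda>k. f (real k)))"
      unfolding p_def by (rule insert.IH) (use insert in auto)
    show "(\<integral>\<^sup>+x. ennreal ((\<lambda>s. f (s + 1)) (\<Sum>j\<in>T. g (x j))) \<partial>PiM T (\<lambda>_. D))
        \<le> ennreal (measure_pmf.expectation (binomial_pmf (card T) p) (\<lambda>k. (\<lambda>s. f (s + 1)) (real k)))"
      unfolding p_def
    proof (rule insert.IH)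
      show "(\<lambda>s. f (s + 1)) \<in> borel_measurable borel" by measurable
      show "0 \<le> f (s + 1)" for s using insert by auto
      show "f (s + u + 1) \<le> (1 - u) * f (s + 1) + u * f (s + 1 + 1)" if "0 \<le> u" "u \<le> 1" for s u
        using insert.prems(3)[of u "s+1"] that by (simp add: algebra_simps)
    qed
  qed auto
  also have "\<dots> = ennreal (measure_pmf.expectation (binomial_pmf (card (insert t T)) p) (\<lambda>k. f (real k)))"
  proof -
    have nn: "0 \<le> measure_pmf.expectation (binomial_pmf (card T) p) (\<lambda>k. f (real k))"
      "0 \<le> measure_pmf.expectation (binomial_pmf (card T) p) (\<lambda>k. f (real k + 1))"
      using insert.prems(2) by (auto intro!: integral_nonneg_AE)
    have e: "measure_pmf.expectation (binomial_pmf (card (insert t T)) p) (\<lambda>k. f (real k))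
      = (1-p) * measure_pmf.expectation (binomial_pmf (card T) p) (\<lambda>k. f (real k))
        + p * measure_pmf.expectation (binomial_pmf (card T) p) (\<lambda>k. f (real k + 1))"
      using insert(1,2) p unfolding p_def by (simp add: binom_rec add.commute)
    show ?thesis
      using p nn unfolding p_def[symmetric] by (subst e, intro enn_lin[symmetric]) auto
  qed
  finally show ?case unfolding p_def .
  }
qed

lemma dG_aux: "0<x \<Longrightarrow> x<1 \<Longrightarrow> ((\<lambda>x. K * ln x + (N-K) * ln (1-x) + 2*N*(x-q)^2) has_real_derivative (K/x - (N-K)/(1-x) + 4*N*(x-q))) (at x)"
  for K N q x :: real
  apply (rule derivative_eq_intros refl | simp)+
  done

lemma h_deriv:
  fixes K N q x :: real and k n :: nat
  assumes x: "0 < x" "x < 1" and K: "K = real k" and N: "N = real n" and kn: "k \<le> n"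
  shows "((\<lambda>x. x^k * (1-x)^(n-k) * exp (2*N*(x-q)^2)) has_real_derivative
      (x^k * (1-x)^(n-k) * exp (2*N*(x-q)^2)) * (K/x - (N-K)/(1-x) + 4*N*(x-q))) (at x)"
proof -
  define G where "G = (\<lambda>x. K * ln x + (N-K) * ln (1-x) + 2*N*(x-q)^2)"
  have dG: "(G has_real_derivative (K/x - (N-K)/(1-x) + 4*N*(x-q))) (at x)"
    unfolding G_def using dG_aux[OF x] by blast
  have "((\<lambda>x. exp (G x)) has_real_derivative exp (G x) * (K/x - (N-K)/(1-x) + 4*N*(x-q))) (at x)"
    using DERIV_chain2[OF DERIV_exp dG] by simp
  moreover have eq: "exp (G y) = y^k * (1-y)^(n-k) * exp (2*N*(y-q)^2)" if "y \<in> {0<..<1}" for y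
  proof -
    have "exp (G y) = exp (K * ln y) * exp ((N-K) * ln (1-y)) * exp (2*N*(y-q)^2)"
      unfolding G_def by (simp add: exp_add)
    also have "exp (K * ln y) = y^k" using that K by (simp add: exp_of_nat_mult)
    also have "exp ((N-K) * ln (1-y)) = (1-y)^(n-k)"
    proof -
      have e: "N - K = real (n-k)" using K N kn by (simp add: of_nat_diff)
      have "exp ((N-K) * ln (1-y)) = exp (ln (1-y)) ^ (n-k)" unfolding e by (rule exp_of_nat_mult)
      also have "exp (ln (1-y)) = 1 - y" using that by simp
      finally show ?thesis .
    qed
    finally show ?thesis .
  qed
  moreover have "exp (G x) = x^k * (1-x)^(n-k) * exp (2*N*(x-q)^2)" using x by (intro eq) simp
  ultimately have d2: "((\<lambda>x. exp (G x)) has_real_derivative (x^k * (1-x)^(n-k) * exp (2*N*(x-q)^2)) * (K/x - (N-K)/(1-x) + 4*N*(x-q))) (at x)"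
    by metis
  show ?thesis
  proof (rule has_field_derivative_transform_within_open[OF d2, where S="{0<..<1}"])
    show "x \<in> {0<..<1}" using x by simp
  qed (auto intro: eq)
qed

lemma pinsker_term:
  fixes \<mu> :: real and k n :: nat
  assumes n: "1 \<le> n" and kn: "k \<le> n" and mu: "0 \<le> \<mu>" "\<mu> \<le> 1"
  shows "\<mu>^k * (1-\<mu>)^(n-k) * exp (2*real n*(\<mu> - real k/real n)^2) \<le> (real k/real n)^k * (1 - real k/real n)^(n-k)"
proof -
  define q where "q = real k / real n"
  define N where "N = real n"
  define K where "K = real k"
  have Nq: "N * q = K" using n unfolding q_def N_def K_def by simp
  have q01: "0 \<le> q" "q \<le> 1" using n kn unfolding q_def by (auto simp: field_simps)
  define h where "h = (\<lambda>x::real. x^k * (1-x)^(n-k) * exp (2*N*(x-q)^2))"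
  have cont: "continuous_on A h" for A unfolding h_def by (intro continuous_intros)
  have sgn: "K/x - (N-K)/(1-x) + 4*N*(x-q) = (K - N*x) * (1 - 4*x*(1-x)) / (x*(1-x))" if "0<x" "x<1" for x
    using that Nq by (simp add: field_simps) (simp add: Nq[symmetric] algebra_simps)
  have fac: "0 \<le> 1 - 4*x*(1-x)" for x :: real
  proof -
    have "0 \<le> (2*x-1)^2" by simp
    then show ?thesis by (simp add: power2_eq_square algebra_simps)
  qed
  have hq: "h \<mu> \<le> h q"
  proof (cases "\<mu> \<le> q")
    case True
    show ?thesis
    proof (rule DERIV_nonneg_imp_increasing_open[OF True _ cont])
      fix x assume x: "\<mu> < x" "x < q"
      then have x01: "0 < x" "x < 1" using mu q01 by auto
      have "0 \<le> K - N*x" using x Nq N_def n by (metis diff_ge_0_iff_ge less_eq_real_def mult_left_mono of_nat_0_le_iff)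
      then have s1: "0 \<le> (K - N*x) * (1 - 4*x*(1-x)) / (x*(1-x))"
        using x01 fac by (intro divide_nonneg_pos mult_nonneg_nonneg) auto
      have d: "(h has_real_derivative (h x * ((K - N*x) * (1 - 4*x*(1-x)) / (x*(1-x))))) (at x)"
        using h_deriv[OF x01 K_def N_def kn, of q] unfolding sgn[OF x01, symmetric] h_def .
      have "0 \<le> h x" unfolding h_def using x01 by simp
      from mult_nonneg_nonneg[OF this s1] d show "\<exists>y. (h has_real_derivative y) (at x) \<and> 0 \<le> y"
        by blast
    qed
  next
    case False
    then have le: "q \<le> \<mu>" by simp
    show ?thesis
    proof (rule DERIV_nonpos_imp_decreasing_open[OF le _ cont])
      fix x assume x: "q < x" "x < \<mu>"
      then have x01: "0 < x" "x < 1" using mu q01 by auto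
      have "K - N*x \<le> 0" using x Nq N_def n by (metis diff_le_0_iff_le less_eq_real_def mult_left_mono of_nat_0_le_iff)
      then have s1: "(K - N*x) * (1 - 4*x*(1-x)) / (x*(1-x)) \<le> 0"
        using x01 fac by (intro divide_nonpos_pos mult_nonpos_nonneg) auto
      have d: "(h has_real_derivative (h x * ((K - N*x) * (1 - 4*x*(1-x)) / (x*(1-x))))) (at x)"
        using h_deriv[OF x01 K_def N_def kn, of q] unfolding sgn[OF x01, symmetric] h_def .
      have "0 \<le> h x" unfolding h_def using x01 by simp
      from mult_nonneg_nonpos[OF this s1] d show "\<exists>y. (h has_real_derivative y) (at x) \<and> y \<le> 0"
        by blast
    qed
  qed
  have "(\<mu> - q)^2 = (\<mu> - q)^2" ..
  then show ?thesis using hq unfolding h_def q_def N_def by simp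
qed

lemma exp_sq_conv:
  fixes a b c z t :: real
  assumes c: "0 \<le> c" and tt: "0 \<le> t" "t \<le> 1"
  shows "exp (c * (a - b*(z+t))^2) \<le> (1-t) * exp (c * (a - b*z)^2) + t * exp (c * (a - b*(z+1))^2)"
proof -
  define X where "X = a - b*z"
  define Y where "Y = a - b*(z+1)"
  have L: "a - b*(z+t) = (1-t)*X + t*Y" unfolding X_def Y_def by (simp add: algebra_simps)
  have "(1-t)*X^2 + t*Y^2 - ((1-t)*X + t*Y)^2 = t*(1-t)*(X-Y)^2"
    by (simp add: algebra_simps power2_eq_square)
  moreover have "0 \<le> t*(1-t)*(X-Y)^2" using tt by simp
  ultimately have sq: "((1-t)*X + t*Y)^2 \<le> (1-t)*X^2 + t*Y^2" by linarith
  have "exp (c * (a - b*(z+t))^2) \<le> exp ((1-t) * (c*X^2) + t * (c*Y^2))"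
    unfolding L using mult_left_mono[OF sq c] by (simp add: algebra_simps)
  also have "\<dots> \<le> (1-t) * exp (c*X^2) + t * exp (c*Y^2)"
    using convex_onD[OF exp_convex, of t "c*X^2" "c*Y^2"] tt by simp
  finally show ?thesis unfolding X_def Y_def .
qed

lemma single_bound:
  assumes D: "prob_space D" and g[measurable]: "g \<in> borel_measurable D"
    and g01: "\<And>z. z \<in> space D \<Longrightarrow> 0 \<le> g z \<and> g z \<le> 1"
    and fin: "finite T" and cT: "card T = n" and n: "1 \<le> n"
  shows "(\<integral>\<^sup>+y. ennreal (exp (2 * real n * (integral\<^sup>L D g - (\<Sum>j\<in>T. g (y j)) / real n)^2)) \<partial>PiM T (\<lambda>_. D))
           \<le> ennreal (xi n)"
proof -
  interpret prob_space D by (fact D)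
  have ig: "integrable D g"
    by (rule integrable_const_bound[where B=1]) (use g01 in auto)
  define \<mu> where "\<mu> = integral\<^sup>L D g"
  have p: "\<mu> \<in> {0..1}"
    unfolding \<mu>_def using g01 ig by (auto intro!: integral_ge_const integral_le_const AE_I2)
  define f where "f = (\<lambda>s. exp (2 * real n * (\<mu> - (1/real n) * s)^2))"
  have fe: "f s = exp (2 * real n * (\<mu> - s / real n)^2)" for s unfolding f_def by simp
  have "(\<integral>\<^sup>+y. ennreal (f (\<Sum>j\<in>T. g (y j))) \<partial>PiM T (\<lambda>_. D))
     \<le> ennreal (measure_pmf.expectation (binomial_pmf (card T) \<mu>) (\<lambda>k. f (real k)))"
    unfolding \<mu>_def
  proof (rule maurer[OF D g g01 fin])
    show "f \<in> borel_measurable borel" unfolding f_def by measurable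
    show "0 \<le> f s" for s unfolding f_def by simp
    show "f (s + u) \<le> (1 - u) * f s + u * f (s + 1)" if "0 \<le> u" "u \<le> 1" for s u
      unfolding f_def by (rule exp_sq_conv) (use that in auto)
  qed
  also have "measure_pmf.expectation (binomial_pmf (card T) \<mu>) (\<lambda>k. f (real k))
      = (\<Sum>k\<le>n. real (n choose k) * \<mu> ^ k * (1 - \<mu>) ^ (n - k) * f (real k))"
    using p cT by (simp add: expectation_binomial_pmf')
  also have "\<dots> \<le> (\<Sum>k\<le>n. real (n choose k) * ((real k / real n) ^ k * (1 - real k / real n) ^ (n - k)))"
  proof (rule sum_mono)
    fix k assume k: "k \<in> {..n}"
    have "\<mu> ^ k * (1 - \<mu>) ^ (n - k) * f (real k) \<le> (real k / real n) ^ k * (1 - real k / real n) ^ (n - k)"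
      unfolding fe using pinsker_term[OF n _, of k \<mu>] k p by simp
    then show "real (n choose k) * \<mu> ^ k * (1 - \<mu>) ^ (n - k) * f (real k)
        \<le> real (n choose k) * ((real k / real n) ^ k * (1 - real k / real n) ^ (n - k))"
      by (simp add: mult.assoc mult_left_mono)
  qed
  also have "\<dots> = xi n" unfolding xi_def by (simp add: atLeast0AtMost mult.assoc)
  finally show ?thesis unfolding f_def \<mu>_def by (simp add: divide_inverse mult.commute) (metis ennreal_leI)
qed

lemma claim1:
  fixes ll :: "(nat \<Rightarrow> 'a) \<Rightarrow> 'a \<Rightarrow> real"
  assumes D: "prob_space D"
    and KT: "K \<inter> T = {}" "finite K" "finite T" and cT: "card T = n" and n: "1 \<le> n"
    and lm: "(\<lambda>(S, z). ll S z) \<in> borel_measurable (PiM (K \<union> T) (\<lambda>_. D) \<Otimes>\<^sub>M D)"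
    and Fm: "(\<lambda>S. ennreal (exp (2 * real n * ((\<integral>z. ll S z \<partial>D) - (\<Sum>j\<in>T. ll S (S j)) / real n)^2)))
              \<in> borel_measurable (PiM (K \<union> T) (\<lambda>_. D))"
    and loc: "\<And>S S' z. (\<And>j. j \<in> K \<Longrightarrow> S j = S' j) \<Longrightarrow> ll S z = ll S' z"
    and l01: "\<And>S z. S \<in> space (PiM (K \<union> T) (\<lambda>_. D)) \<Longrightarrow> z \<in> space D \<Longrightarrow> 0 \<le> ll S z \<and> ll S z \<le> 1"
  shows "(\<integral>\<^sup>+S. ennreal (exp (2 * real n * ((\<integral>z. ll S z \<partial>D) - (\<Sum>j\<in>T. ll S (S j)) / real n)^2))
            \<partial>PiM (K \<union> T) (\<lambda>_. D)) \<le> ennreal (xi n)"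
proof -
  interpret PS: product_sigma_finite "\<lambda>_. D"
    by (simp add: product_sigma_finite_def prob_space_imp_sigma_finite D)
  interpret PK: prob_space "PiM K (\<lambda>_. D)" by (rule prob_space_PiM) (rule D)
  interpret PT: prob_space "PiM T (\<lambda>_. D)" by (rule prob_space_PiM) (rule D)
  define F where "F = (\<lambda>S. ennreal (exp (2 * real n * ((\<integral>z. ll S z \<partial>D) - (\<Sum>j\<in>T. ll S (S j)) / real n)^2)))"
  have "(\<integral>\<^sup>+S. F S \<partial>PiM (K \<union> T) (\<lambda>_. D))
      = (\<integral>\<^sup>+x. (\<integral>\<^sup>+y. F (merge K T (x, y)) \<partial>PiM T (\<lambda>_. D)) \<partial>PiM K (\<lambda>_. D))"
    using Fm unfolding F_def by (intro PS.product_nn_integral_fold KT)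
  also have "\<dots> \<le> (\<integral>\<^sup>+x. ennreal (xi n) \<partial>PiM K (\<lambda>_. D))"
  proof (rule nn_integral_mono)
    fix x assume x: "x \<in> space (PiM K (\<lambda>_. D))"
    obtain y0 where y0: "y0 \<in> space (PiM T (\<lambda>_. D))" using PT.not_empty by blast
    define S0 where "S0 = merge K T (x, y0)"
    have S0: "S0 \<in> space (PiM (K \<union> T) (\<lambda>_. D))"
      unfolding S0_def using measurable_space[OF measurable_merge, of "(x, y0)" K "\<lambda>_. D" T] x y0
      by (simp add: space_pair_measure)
    define g where "g = ll S0"
    have gm: "g \<in> borel_measurable D"
      unfolding g_def using measurable_Pair2[OF lm S0] by simp
    have g01: "\<And>z. z \<in> space D \<Longrightarrow> 0 \<le> g z \<and> g z \<le> 1"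
      unfolding g_def using l01 S0 by blast
    have "(\<integral>\<^sup>+y. F (merge K T (x, y)) \<partial>PiM T (\<lambda>_. D))
        = (\<integral>\<^sup>+y. ennreal (exp (2 * real n * (integral\<^sup>L D g - (\<Sum>j\<in>T. g (y j)) / real n)^2)) \<partial>PiM T (\<lambda>_. D))"
    proof (rule nn_integral_cong)
      fix y
      have eq: "ll (merge K T (x, y)) = g"
        unfolding g_def S0_def using KT(1) by (intro ext loc) simp
      have "(\<Sum>j\<in>T. g (merge K T (x, y) j)) = (\<Sum>j\<in>T. g (y j))"
        using KT(1) by (intro sum.cong) auto
      then show "F (merge K T (x, y)) = ennreal (exp (2 * real n * (integral\<^sup>L D g - (\<Sum>j\<in>T. g (y j)) / real n)^2))"
        unfolding F_def eq by simp
    qed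
    also have "\<dots> \<le> ennreal (xi n)"
      by (rule single_bound[OF D gm g01 KT(3) cT n])
    finally show "(\<integral>\<^sup>+y. F (merge K T (x, y)) \<partial>PiM T (\<lambda>_. D)) \<le> ennreal (xi n)" .
  qed
  also have "\<dots> = ennreal (xi n)" by (simp add: PK.emeasure_space_1)
  finally show ?thesis unfolding F_def .
qed

lemma pair_bound:
  fixes d Q P :: "'a \<Rightarrow> real"
  assumes fin: "finite F" and negF: "\<And>a. a \<in> F \<Longrightarrow> neg a \<in> F" and inv: "\<And>a. a \<in> F \<Longrightarrow> neg (neg a) = a"
    and dneg: "\<And>a. a \<in> F \<Longrightarrow> d (neg a) = - d a"
    and al: "\<And>a. a \<in> F \<Longrightarrow> Q a + Q (neg a) = P a + P (neg a)"
    and Q0: "\<And>a. 0 \<le> Q a" and P0: "\<And>a. 0 \<le> P a"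
  shows "(\<Sum>a\<in>F. Q a * d a) \<le> (\<Sum>a\<in>F. P a * \<bar>d a\<bar>)"
proof -
  have bij: "bij_betw neg F F"
    by (rule bij_betwI[where g=neg]) (use negF inv in auto)
  have r1: "(\<Sum>a\<in>F. Q a * d a) = (\<Sum>a\<in>F. Q (neg a) * d (neg a))"
    using sum.reindex_bij_betw[OF bij, of "\<lambda>a. Q a * d a"] by simp
  have r2: "(\<Sum>a\<in>F. P a * \<bar>d a\<bar>) = (\<Sum>a\<in>F. P (neg a) * \<bar>d (neg a)\<bar>)"
    using sum.reindex_bij_betw[OF bij, of "\<lambda>a. P a * \<bar>d a\<bar>"] by simp
  have "2 * (\<Sum>a\<in>F. Q a * d a) = (\<Sum>a\<in>F. Q a * d a) + (\<Sum>a\<in>F. Q (neg a) * d (neg a))"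
    using r1 by simp
  also have "\<dots> = (\<Sum>a\<in>F. (Q a - Q (neg a)) * d a)"
    using dneg by (simp add: sum.distrib[symmetric] algebra_simps)
  also have "\<dots> \<le> (\<Sum>a\<in>F. (Q a + Q (neg a)) * \<bar>d a\<bar>)"
  proof (rule sum_mono)
    fix a assume "a \<in> F"
    have "(Q a - Q (neg a)) * d a \<le> \<bar>(Q a - Q (neg a)) * d a\<bar>" by simp
    also have "\<dots> = \<bar>Q a - Q (neg a)\<bar> * \<bar>d a\<bar>" by (simp add: abs_mult)
    also have "\<dots> \<le> (Q a + Q (neg a)) * \<bar>d a\<bar>"
      using Q0[of a] Q0[of "neg a"] by (intro mult_right_mono) auto
    finally show "(Q a - Q (neg a)) * d a \<le> (Q a + Q (neg a)) * \<bar>d a\<bar>" .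
  qed
  also have "\<dots> = (\<Sum>a\<in>F. P a * \<bar>d a\<bar>) + (\<Sum>a\<in>F. P (neg a) * \<bar>d (neg a)\<bar>)"
    using al dneg by (simp add: sum.distrib[symmetric] algebra_simps)
  also have "\<dots> = 2 * (\<Sum>a\<in>F. P a * \<bar>d a\<bar>)" using r2 by simp
  finally show ?thesis by simp
qed

lemma jensen_sq:
  fixes P e :: "'a \<Rightarrow> real"
  assumes fin: "finite F" and P0: "\<And>a. 0 \<le> P a" and P1: "(\<Sum>a\<in>F. P a) = 1"
  shows "(\<Sum>a\<in>F. P a * \<bar>e a\<bar>)^2 \<le> (\<Sum>a\<in>F. P a * (e a)^2)"
proof -
  define A0 where "A0 = (\<Sum>a\<in>F. P a * \<bar>e a\<bar>)"
  have "0 \<le> (\<Sum>a\<in>F. P a * (\<bar>e a\<bar> - A0)^2)"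
    using P0 by (intro sum_nonneg) auto
  also have "(\<Sum>a\<in>F. P a * (\<bar>e a\<bar> - A0)^2)
      = (\<Sum>a\<in>F. P a * (e a)^2) - 2 * A0 * (\<Sum>a\<in>F. P a * \<bar>e a\<bar>) + A0^2 * (\<Sum>a\<in>F. P a)"
    by (simp add: power2_eq_square algebra_simps sum.distrib sum_subtractf sum_distrib_left sum_distrib_right)
  finally show ?thesis using P1 unfolding A0_def by (simp add: power2_eq_square)
qed

lemma jensen_exp:
  fixes P x :: "'a \<Rightarrow> real"
  assumes fin: "finite F" and P0: "\<And>a. 0 \<le> P a" and P1: "(\<Sum>a\<in>F. P a) = 1"
  shows "exp (\<Sum>a\<in>F. P a * x a) \<le> (\<Sum>a\<in>F. P a * exp (x a))"
proof -
  have ne: "F \<noteq> {}" using P1 by auto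
  show ?thesis
    using convex_on_sum[OF fin ne exp_convex P1, of x] P0 by simp
qed

lemma fin_ar:
  fixes lam m A0 W :: real
  assumes "0 \<le> lam" "lam < m" "0 \<le> A0" "A0 \<le> 1" "2*(m-lam)*A0^2 \<le> W"
  shows "A0 + lam/m \<le> sqrt (1/(2*(m-lam)) * (4*lam + W))"
proof (rule real_le_rsqrt)
  have m: "0 < m" "0 < m - lam" using assms by auto
  have a2: "A0^2 \<le> W / (2*(m-lam))" using assms(5) m by (simp add: field_simps)
  have L: "2 * (lam/m) + (lam/m)^2 \<le> 2 * lam / (m - lam)"
  proof -
    have "(2*m + lam) * (m - lam) \<le> 2 * m * m" using assms by (simp add: algebra_simps)
    then have "2 + lam/m \<le> 2*m/(m-lam)" using m by (simp add: field_simps)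
    then have "lam/m * (2 + lam/m) \<le> lam/m * (2*m/(m-lam))" using assms m by (intro mult_left_mono) auto
    then show ?thesis using m by (simp add: power2_eq_square algebra_simps)
  qed
  have "(A0 + lam/m)^2 = A0^2 + 2*A0*(lam/m) + (lam/m)^2" by (simp add: power2_eq_square algebra_simps)
  also have "\<dots> \<le> W / (2*(m-lam)) + 2*(lam/m) + (lam/m)^2"
  proof -
    have "A0 * (lam/m) \<le> 1 * (lam/m)" using assms m by (intro mult_right_mono) auto
    then show ?thesis using a2 by simp
  qed
  also have "\<dots> \<le> W / (2*(m-lam)) + 2 * lam / (m - lam)" using L by simp
  also have "\<dots> = 1/(2*(m-lam)) * (4*lam + W)"
  proof -
    have nz: "m - lam \<noteq> 0" using m by simp
    have "W / (2*(m-lam)) + 2 * lam / (m - lam) = (W + 4*lam) / (2*(m-lam))"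
    proof -
      have "2 * lam / (m - lam) = 4 * lam / (2*(m-lam))" using nz by (simp add: divide_simps)
      then show ?thesis by (simp add: add_divide_distrib)
    qed
    then show ?thesis by (simp add: add.commute)
  qed
  finally show "(A0 + lam/m)^2 \<le> 1/(2*(m-lam)) * (4*lam + W)" .
qed

lemma xi_ge1:
  assumes "1 \<le> n" shows "1 \<le> xi n"
proof -
  have "(\<lambda>k. real (n choose k) * (real k / real n) ^ k * (1 - real k / real n) ^ (n - k)) 0
        \<le> xi n"
    unfolding xi_def
  proof (rule member_le_sum)
    fix k assume "k \<in> {0..n} - {0}"
    then have "real k / real n \<le> 1" by auto
    then show "0 \<le> real (n choose k) * (real k / real n) ^ k * (1 - real k / real n) ^ (n - k)" by simp
  qed auto
  then show ?thesis by simp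
qed

theorem mainTheorem17:
  fixes X :: "'x measure" and D :: "('x \<times> real) measure"
    and R :: "('x \<times> real) list \<Rightarrow> int list \<Rightarrow> 'x \<Rightarrow> real"
    and P :: "(nat list \<times> int list) pmf" and m lam :: nat and \<delta> :: real
  assumes "lam < m"
    and "prob_space D"
    and "sets D = sets (X \<Otimes>\<^sub>M count_space {-1, 1})"
    and "self_complemented R"
    and "\<forall>L \<sigma> x. \<bar>R L \<sigma> x\<bar> \<le> 1"
    and "\<forall>i\<in>idx_seqs m lam. \<forall>\<sigma>\<in>msgs lam.
           (\<lambda>(S, x). R (map S i) \<sigma> x) \<in> borel_measurable (PiM {..<m} (\<lambda>_. D) \<Otimes>\<^sub>M X)"
    and "set_pmf P \<subseteq> idx_seqs m lam \<times> msgs lam"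
    and "0 < \<delta>" and "\<delta> \<le> 1"
  shows "\<exists>A\<in>sets (PiM {..<m} (\<lambda>_. D)).
           measure (PiM {..<m} (\<lambda>_. D)) A \<ge> 1 - \<delta> \<and>
           (\<forall>S\<in>A. \<forall>Q. set_pmf Q \<subseteq> idx_seqs m lam \<times> msgs lam \<and> aligned Q P \<longrightarrow>
              risk_D D R Q S \<le> risk_S m R Q S
                + sqrt (1 / (2 * (real m - real lam)) * (4 * real lam + ln (xi (m - lam) / \<delta>))))"
proof -
  interpret Dp: prob_space D by (rule assms(2))
  define n where "n = m - lam"
  have n1: "1 \<le> n" using assms(1) unfolding n_def by simp
  have rn: "real n = real m - real lam" using assms(1) unfolding n_def by simp
  define M where "M = PiM {..<m} (\<lambda>_. D)"
  interpret PM: prob_space M unfolding M_def by (rule prob_space_PiM) (rule assms(2))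
  define F where "F = idx_seqs m lam \<times> msgs lam"
  have finF: "finite F"
  proof -
    have "idx_seqs m lam = {xs. set xs \<subseteq> {..<m} \<and> length xs \<le> lam}" unfolding idx_seqs_def by auto
    then have f1: "finite (idx_seqs m lam)" using finite_lists_length_le[of "{..<m}" lam] by simp
    have "msgs lam \<subseteq> {xs. set xs \<subseteq> {-1,1} \<and> length xs \<le> lam}" unfolding msgs_def by auto
    then have f2: "finite (msgs lam)" using finite_lists_length_le[of "{-1,1::int}" lam] finite_subset by blast
    show ?thesis unfolding F_def using f1 f2 by simp
  qed
  have spaceD: "space D = space X \<times> {-1,1}"
    using sets_eq_imp_space_eq[OF assms(3)] by (simp add: space_pair_measure)
  have fstD: "fst \<in> measurable D X"
    using measurable_cong_sets[OF assms(3) refl, of X] measurable_fst by blast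
  have sndD: "snd \<in> borel_measurable D"
  proof -
    have h1: "snd \<in> measurable (X \<Otimes>\<^sub>M count_space {-1, 1}) (count_space {-1,1::real})" by (rule measurable_snd)
    have h2: "(\<lambda>x::real. x) \<in> measurable (count_space {-1,1}) borel" by simp
    have "snd \<in> measurable (X \<Otimes>\<^sub>M count_space {-1, 1::real}) borel" using measurable_compose[OF h1 h2] .
    then show ?thesis by (subst measurable_cong_sets[OF assms(3) refl])
  qed
  have Tex: "\<exists>T. T \<subseteq> {..<m} - set i \<and> card T = n" if i: "i \<in> idx_seqs m lam" for i
  proof -
    have si: "set i \<subseteq> {..<m}" "length i \<le> lam" using i unfolding idx_seqs_def by auto
    have "card (set i) \<le> lam" using card_length[of i] si by linarith
    then have "n \<le> card ({..<m} - set i)" using si unfolding n_def by (simp add: card_Diff_subset)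
    then obtain T where "T \<subseteq> {..<m} - set i" "card T = n" by (rule obtain_subset_with_card_n)
    then show ?thesis by blast
  qed
  define Tsel where "Tsel = (\<lambda>i. SOME T. T \<subseteq> {..<m} - set i \<and> card T = n)"
  have Tsel: "Tsel i \<subseteq> {..<m} - set i" "card (Tsel i) = n" if "i \<in> idx_seqs m lam" for i
    using someI_ex[OF Tex[OF that]] unfolding Tsel_def by auto
  define ll where "ll = (\<lambda>i \<sigma> (S::nat \<Rightarrow> 'x \<times> real) (z::'x \<times> real). (1 - snd z * R (map S i) \<sigma> (fst z)) / 2)"
  define mu where "mu = (\<lambda>i \<sigma> S. \<integral>z. ll i \<sigma> S z \<partial>D)"
  define e where "e = (\<lambda>i \<sigma> S. mu i \<sigma> S - (\<Sum>j\<in>Tsel i. ll i \<sigma> S (S j)) / real n)"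
  define Phi where "Phi = (\<lambda>S. \<Sum>a\<in>F. pmf P a * exp (2 * real n * (e (fst a) (snd a) S)^2))"

  have llm: "(\<lambda>(S,z). ll i \<sigma> S z) \<in> borel_measurable (M \<Otimes>\<^sub>M D)" if "(i,\<sigma>) \<in> F" for i \<sigma>
  proof -
    define H where "H = (\<lambda>p::(nat \<Rightarrow> 'x \<times> real) \<times> 'x. R (map (fst p) i) \<sigma> (snd p))"
    have HH: "H = (\<lambda>(S, x). R (map S i) \<sigma> x)" unfolding H_def by auto
    have Hm: "H \<in> borel_measurable (M \<Otimes>\<^sub>M X)"
      using assms(6) that unfolding F_def M_def HH by blast
    have eq: "(\<lambda>(S,z). ll i \<sigma> S z) = (\<lambda>w. (1 - snd (snd w) * H (fst w, fst (snd w))) / 2)"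
      unfolding ll_def H_def by (auto simp: fun_eq_iff)
    have p1: "(\<lambda>w. (fst w, fst (snd w))) \<in> measurable (M \<Otimes>\<^sub>M D) (M \<Otimes>\<^sub>M X)"
      by (intro measurable_Pair measurable_fst measurable_compose[OF measurable_snd fstD])
    have h: "(\<lambda>w. H (fst w, fst (snd w))) \<in> borel_measurable (M \<Otimes>\<^sub>M D)"
      using measurable_compose[OF p1 Hm] .
    have sn: "(\<lambda>w. snd (snd w)) \<in> borel_measurable (M \<Otimes>\<^sub>M D)"
      using measurable_compose[OF measurable_snd sndD] .
    have "(\<lambda>w. 1 - snd (snd w) * H (fst w, fst (snd w))) \<in> borel_measurable (M \<Otimes>\<^sub>M D)"
      by (rule borel_measurable_diff[OF borel_measurable_const borel_measurable_times[OF sn h]])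
    from borel_measurable_divide[OF this borel_measurable_const]
    show ?thesis unfolding eq .
  qed
  have l01: "0 \<le> ll i \<sigma> S z \<and> ll i \<sigma> S z \<le> 1" if "z \<in> space D" for i \<sigma> S z
  proof -
    have y: "snd z \<in> {-1, 1}" using that unfolding spaceD by (cases z) simp
    define r where "r = R (map S i) \<sigma> (fst z)"
    have "\<bar>r\<bar> \<le> 1" unfolding r_def using assms(5) by blast
    then have r: "-1 \<le> r" "r \<le> 1" by linarith+
    have l: "ll i \<sigma> S z = (1 - snd z * r) / 2" unfolding ll_def r_def by simp
    show ?thesis
    proof (cases "snd z = 1")
      case True
      then show ?thesis unfolding l using r by simp
    next
      case False
      then have "snd z = -1" using y by simp
      then show ?thesis unfolding l using r by simp
    qed
  qed
  have Sj: "S j \<in> space D" if "S \<in> space M" "j < m" for S j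
    using that unfolding M_def by (auto simp: space_PiM)
  have llint: "integrable D (ll i \<sigma> S)" if "(i,\<sigma>) \<in> F" "S \<in> space M" for i \<sigma> S
  proof (rule Dp.integrable_const_bound[where B=1])
    show "ll i \<sigma> S \<in> borel_measurable D" using measurable_Pair2[OF llm[OF that(1)] that(2)] by simp
    show "AE x in D. norm (ll i \<sigma> S x) \<le> 1" using l01 by (intro AE_I2) auto
  qed
  have mu01: "0 \<le> mu i \<sigma> S \<and> mu i \<sigma> S \<le> 1" if "(i,\<sigma>) \<in> F" "S \<in> space M" for i \<sigma> S
    unfolding mu_def using llint[OF that] l01
    by (auto intro!: Dp.integral_ge_const Dp.integral_le_const AE_I2)
  have mum: "(\<lambda>S. mu i \<sigma> S) \<in> borel_measurable M" if "(i,\<sigma>) \<in> F" for i \<sigma>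
    unfolding mu_def using Dp.borel_measurable_lebesgue_integral[of "ll i \<sigma>" M] llm[OF that]
    by (simp add: case_prod_beta')
  have lljm: "(\<lambda>S. ll i \<sigma> S (S j)) \<in> borel_measurable M" if "(i,\<sigma>) \<in> F" "j < m" for i \<sigma> j
  proof -
    have "(\<lambda>S. (S, S j)) \<in> measurable M (M \<Otimes>\<^sub>M D)"
      unfolding M_def using that(2) by (intro measurable_Pair measurable_ident_sets refl measurable_component_singleton) auto
    from measurable_comp[OF this llm[OF that(1)]] show ?thesis by (simp add: comp_def)
  qed
  have em: "(\<lambda>S. e i \<sigma> S) \<in> borel_measurable M" if "(i,\<sigma>) \<in> F" for i \<sigma>
  proof -
    have i: "i \<in> idx_seqs m lam" using that unfolding F_def by auto
    have "(\<lambda>S. \<Sum>j\<in>Tsel i. ll i \<sigma> S (S j)) \<in> borel_measurable M"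
      using Tsel(1)[OF i] by (intro borel_measurable_sum lljm[OF that]) auto
    then show ?thesis unfolding e_def using mum[OF that]
      by (intro borel_measurable_diff borel_measurable_divide borel_measurable_const)
  qed
  have Phim[measurable]: "Phi \<in> borel_measurable M"
    unfolding Phi_def using em by (intro borel_measurable_sum) (auto simp: case_prod_beta')
  have C1: "(\<integral>\<^sup>+S. ennreal (exp (2 * real n * (e i \<sigma> S)^2)) \<partial>M) \<le> ennreal (xi n)" if a: "(i,\<sigma>) \<in> F" for i \<sigma>
  proof -
    have i: "i \<in> idx_seqs m lam" using a unfolding F_def by auto
    define T where "T = Tsel i"
    define K where "K = {..<m} - T"
    have KT: "K \<inter> T = {}" "finite K" "finite T" "K \<union> T = {..<m}"
      using Tsel(1)[OF i] unfolding K_def T_def by (auto intro: finite_subset)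
    have MKT: "M = PiM (K \<union> T) (\<lambda>_. D)" unfolding M_def KT(4) ..
    have setK: "set i \<subseteq> K" using Tsel(1)[OF i] i unfolding K_def T_def idx_seqs_def by auto
    have "(\<integral>\<^sup>+S. ennreal (exp (2 * real n * ((\<integral>z. ll i \<sigma> S z \<partial>D) - (\<Sum>j\<in>T. ll i \<sigma> S (S j)) / real n)^2))
            \<partial>PiM (K \<union> T) (\<lambda>_. D)) \<le> ennreal (xi n)"
    proof (rule claim1[OF assms(2) KT(1,2,3) _ n1])
      show "card T = n" unfolding T_def using Tsel(2)[OF i] .
      show "(\<lambda>(S, z). ll i \<sigma> S z) \<in> borel_measurable (PiM (K \<union> T) (\<lambda>_. D) \<Otimes>\<^sub>M D)"
        using llm[OF a] unfolding MKT .
      show "(\<lambda>S. ennreal (exp (2 * real n * ((\<integral>z. ll i \<sigma> S z \<partial>D) - (\<Sum>j\<in>T. ll i \<sigma> S (S j)) / real n)^2)))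
              \<in> borel_measurable (PiM (K \<union> T) (\<lambda>_. D))"
      proof -
        have "(\<lambda>S. ennreal (exp (2 * real n * (e i \<sigma> S)^2))) \<in> borel_measurable M"
          by (intro measurable_compose[OF _ measurable_ennreal] measurable_compose[OF _ borel_measurable_exp]
              borel_measurable_times borel_measurable_const borel_measurable_power em[OF a])
        then show ?thesis by (simp only: MKT e_def mu_def T_def)
      qed
      show "ll i \<sigma> S z = ll i \<sigma> S' z" if "\<And>j. j \<in> K \<Longrightarrow> S j = S' j" for S S' z
      proof -
        have mm: "map S i = map S' i" using that setK by (intro map_cong) auto
        show ?thesis unfolding ll_def mm ..
      qed
      show "0 \<le> ll i \<sigma> S z \<and> ll i \<sigma> S z \<le> 1" if "z \<in> space D" for S z using l01[OF that] .
    qed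
    then show ?thesis unfolding MKT e_def mu_def T_def .
  qed
  have P1: "(\<Sum>a\<in>F. pmf P a) = 1" using sum_pmf_eq_1[OF finF] assms(7) unfolding F_def by blast
  have intPhi: "(\<integral>\<^sup>+S. ennreal (Phi S) \<partial>M) \<le> ennreal (xi n)"
  proof -
    have "(\<integral>\<^sup>+S. ennreal (Phi S) \<partial>M) = (\<integral>\<^sup>+S. (\<Sum>a\<in>F. ennreal (pmf P a) * ennreal (exp (2 * real n * (e (fst a) (snd a) S)^2))) \<partial>M)"
      unfolding Phi_def by (intro nn_integral_cong) (simp add: ennreal_mult sum_ennreal[symmetric])
    also have "\<dots> = (\<Sum>a\<in>F. ennreal (pmf P a) * (\<integral>\<^sup>+S. ennreal (exp (2 * real n * (e (fst a) (snd a) S)^2)) \<partial>M))"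
    proof -
      have fm: "(\<lambda>S. ennreal (exp (2 * real n * (e (fst a) (snd a) S)^2))) \<in> borel_measurable M" if "a \<in> F" for a
        using that by (intro measurable_compose[OF _ measurable_ennreal] measurable_compose[OF _ borel_measurable_exp]
              borel_measurable_times borel_measurable_const borel_measurable_power em) auto
      have "(\<integral>\<^sup>+S. (\<Sum>a\<in>F. ennreal (pmf P a) * ennreal (exp (2 * real n * (e (fst a) (snd a) S)^2))) \<partial>M)
          = (\<Sum>a\<in>F. (\<integral>\<^sup>+S. ennreal (pmf P a) * ennreal (exp (2 * real n * (e (fst a) (snd a) S)^2)) \<partial>M))"
      proof (rule nn_integral_sum)
        fix a assume "a \<in> F"
        from fm[OF this] show "(\<lambda>S. ennreal (pmf P a) * ennreal (exp (2 * real n * (e (fst a) (snd a) S)^2))) \<in> borel_measurable M"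
          by (rule borel_measurable_times_ennreal[OF borel_measurable_const])
      qed
      also have "\<dots> = (\<Sum>a\<in>F. ennreal (pmf P a) * (\<integral>\<^sup>+S. ennreal (exp (2 * real n * (e (fst a) (snd a) S)^2)) \<partial>M))"
        using fm by (intro sum.cong refl nn_integral_cmult) auto
      finally show ?thesis .
    qed
    also have "\<dots> \<le> (\<Sum>a\<in>F. ennreal (pmf P a) * ennreal (xi n))"
      using C1 by (intro sum_mono mult_left_mono) (auto simp: case_prod_beta')
    also have "\<dots> = ennreal (xi n)"
      using P1 by (simp add: ennreal_mult[symmetric] sum_ennreal sum_distrib_right[symmetric] sum_nonneg)
    finally show ?thesis .
  qed
  define c where "c = xi n / \<delta>"
  have xi1: "1 \<le> xi n" using xi_ge1[OF n1] .
  have c0: "0 < c" unfolding c_def using xi1 assms(8) by simp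
  define A where "A = {S \<in> space M. Phi S \<le> c}"
  have Asets: "A \<in> sets M" unfolding A_def by measurable
  have "emeasure M (space M - A) \<le> ennreal \<delta>"
  proof -
    have "space M - A \<subseteq> {S \<in> space M. 1 \<le> ennreal (1/c) * ennreal (Phi S)}"
    proof
      fix S assume S: "S \<in> space M - A"
      then have "c < Phi S" unfolding A_def by auto
      then have "1 \<le> (1/c) * Phi S" using c0 by (simp add: field_simps)
      then show "S \<in> {S \<in> space M. 1 \<le> ennreal (1/c) * ennreal (Phi S)}"
        using S c0 by (auto simp: ennreal_mult[symmetric] intro!: ennreal_leI[where x=1, simplified])
    qed
    moreover have "{S \<in> space M. 1 \<le> ennreal (1/c) * ennreal (Phi S)} \<in> sets M" by measurable
    ultimately have "emeasure M (space M - A) \<le> emeasure M {S \<in> space M. 1 \<le> ennreal (1/c) * ennreal (Phi S)}"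
      by (rule emeasure_mono)
    also have "\<dots> \<le> ennreal (1/c) * (\<integral>\<^sup>+S. ennreal (Phi S) * indicator (space M) S \<partial>M)"
      by (rule nn_integral_Markov_inequality) auto
    also have "(\<integral>\<^sup>+S. ennreal (Phi S) * indicator (space M) S \<partial>M) = (\<integral>\<^sup>+S. ennreal (Phi S) \<partial>M)"
      by (intro nn_integral_cong) auto
    also have "ennreal (1/c) * \<dots> \<le> ennreal (1/c) * ennreal (xi n)"
      by (intro mult_left_mono intPhi) auto
    also have "\<dots> = ennreal \<delta>" using c0 xi1 assms(8) unfolding c_def by (simp add: ennreal_mult[symmetric])
    finally show ?thesis .
  qed
  then have "measure M (space M - A) \<le> \<delta>"
    using assms(8) by (simp add: PM.emeasure_eq_measure)
  then have measA: "1 - \<delta> \<le> measure M A"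
    using PM.prob_compl[OF Asets] by simp
  show ?thesis
  proof (intro bexI[of _ A] conjI ballI allI impI)
    show "A \<in> sets (PiM {..<m} (\<lambda>_. D))" using Asets unfolding M_def .
    show "1 - \<delta> \<le> measure (PiM {..<m} (\<lambda>_. D)) A" using measA unfolding M_def .
    fix S Q assume S: "S \<in> A" and Q: "set_pmf Q \<subseteq> idx_seqs m lam \<times> msgs lam \<and> aligned Q P"
    have SM: "S \<in> space M" and PhiS: "Phi S \<le> c" using S unfolding A_def by auto
    have QF: "set_pmf Q \<subseteq> F" using Q unfolding F_def by auto
    define rS where "rS = (\<lambda>i \<sigma>. (\<Sum>j<m. ll i \<sigma> S (S j)) / real m)"
    define d where "d = (\<lambda>a. mu (fst a) (snd a) S - rS (fst a) (snd a))"
    define e' where "e' = (\<lambda>a. e (fst a) (snd a) S)"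
    define L where "L = real lam / real m"
    have rD: "risk_D D R Q S = (\<Sum>a\<in>F. pmf Q a * mu (fst a) (snd a) S)"
      unfolding risk_D_def
      by (subst integral_measure_pmf_real[OF finF]) (use QF in \<open>auto simp: mu_def ll_def case_prod_beta' mult.commute intro!: sum.cong\<close>)
    have rSk: "risk_S m R Q S = (\<Sum>a\<in>F. pmf Q a * rS (fst a) (snd a))"
      unfolding risk_S_def
      by (subst integral_measure_pmf_real[OF finF]) (use QF in \<open>auto simp: rS_def ll_def case_prod_beta' mult.commute intro!: sum.cong\<close>)
    have diff: "risk_D D R Q S - risk_S m R Q S = (\<Sum>a\<in>F. pmf Q a * d a)"
      unfolding rD rSk d_def by (simp add: sum_subtractf[symmetric] algebra_simps)
    define neg where "neg = (\<lambda>a::nat list \<times> int list. (fst a, map uminus (snd a)))"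
    have negF: "neg a \<in> F" if "a \<in> F" for a
      using that unfolding neg_def F_def msgs_def by auto
    have inv: "neg (neg a) = a" for a unfolding neg_def by (simp add: comp_def)
    have llneg: "ll i (map uminus \<sigma>) S z = 1 - ll i \<sigma> S z" for i \<sigma> z
    proof -
      have "R (map S i) (map uminus \<sigma>) = (\<lambda>x. - R (map S i) \<sigma> x)"
        using assms(4) unfolding self_complemented_def by blast
      then show ?thesis unfolding ll_def by (simp add: field_simps)
    qed
    have dneg: "d (neg a) = - d a" if a: "a \<in> F" for a
    proof -
      obtain i \<sigma> where a': "a = (i, \<sigma>)" by (cases a)
      have mun: "mu i (map uminus \<sigma>) S = 1 - mu i \<sigma> S"
      proof -
        have "mu i (map uminus \<sigma>) S = (\<integral>z. 1 - ll i \<sigma> S z \<partial>D)" unfolding mu_def llneg ..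
        also have "\<dots> = 1 - mu i \<sigma> S"
          unfolding mu_def using llint[OF a[unfolded a'] SM] by (simp add: Dp.prob_space)
        finally show ?thesis .
      qed
      have rSn: "rS i (map uminus \<sigma>) = 1 - rS i \<sigma>"
        unfolding rS_def llneg using assms(1) by (simp add: sum_subtractf field_simps)
      show ?thesis unfolding d_def neg_def a' using mun rSn by simp
    qed
    have al: "pmf Q a + pmf Q (neg a) = pmf P a + pmf P (neg a)" for a
      using Q unfolding aligned_def neg_def by (cases a) auto
    have step1: "(\<Sum>a\<in>F. pmf Q a * d a) \<le> (\<Sum>a\<in>F. pmf P a * \<bar>d a\<bar>)"
      by (rule pair_bound[where Q="pmf Q" and P="pmf P" and neg=neg and d=d]) (use finF negF inv dneg al in auto)
    have edge: "\<bar>d a\<bar> \<le> \<bar>e' a\<bar> + L \<and> \<bar>e' a\<bar> \<le> 1" if a: "a \<in> F" for a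
    proof -
      obtain i \<sigma> where a': "a = (i, \<sigma>)" by (cases a)
      have i: "i \<in> idx_seqs m lam" using a a' unfolding F_def by auto
      define T where "T = Tsel i"
      have T: "T \<subseteq> {..<m}" "card T = n" using Tsel[OF i] unfolding T_def by auto
      have finT: "finite T" using T(1) finite_subset by blast
      define f where "f = (\<lambda>j. ll i \<sigma> S (S j))"
      have f01: "0 \<le> f j \<and> f j \<le> 1" if "j < m" for j unfolding f_def using l01[OF Sj[OF SM that]] .
      define sT where "sT = (\<Sum>j\<in>T. f j)"
      define sR where "sR = (\<Sum>j\<in>{..<m} - T. f j)"
      have split: "(\<Sum>j<m. f j) = sR + sT" unfolding sT_def sR_def
        using sum.subset_diff[OF T(1), of f] by simp
      have cR: "card ({..<m} - T) = lam" using T assms(1) unfolding n_def by (simp add: card_Diff_subset finT)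
      have sT0: "0 \<le> sT" "sT \<le> real n"
      proof -
        show "0 \<le> sT" unfolding sT_def using f01 T(1) by (intro sum_nonneg) auto
        have "sT \<le> real (card T) * 1" unfolding sT_def using f01 T(1) by (intro sum_bounded_above) auto
        then show "sT \<le> real n" using T(2) by simp
      qed
      have sR0: "0 \<le> sR" "sR \<le> real lam"
      proof -
        show "0 \<le> sR" unfolding sR_def using f01 by (intro sum_nonneg) auto
        have "sR \<le> real (card ({..<m} - T)) * 1" unfolding sR_def using f01 by (intro sum_bounded_above) auto
        then show "sR \<le> real lam" using cR by simp
      qed
      have npos: "0 < real n" using n1 by simp
      have mpos: "0 < real m" using assms(1) by simp
      define u where "u = sT / real n"
      have u01: "0 \<le> u" "u \<le> 1" unfolding u_def using sT0 npos by auto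
      have mu01': "0 \<le> mu i \<sigma> S" "mu i \<sigma> S \<le> 1" using mu01[OF a[unfolded a'] SM] by auto
      have ee: "e' a = mu i \<sigma> S - u" unfolding e'_def a' e_def u_def sT_def f_def T_def by simp
      have dd: "d a = mu i \<sigma> S - (sR + sT) / real m"
        unfolding d_def a' rS_def using split unfolding f_def by simp
      have sTu: "sT = real n * u" unfolding u_def using npos by simp
      have "d a - e' a = (real lam * u - sR) / real m"
        unfolding dd ee sTu using mpos rn by (simp add: field_simps) (metis distrib_left)
      moreover have "\<bar>real lam * u - sR\<bar> \<le> real lam"
      proof -
        have "0 \<le> real lam * u" "real lam * u \<le> real lam"
          using u01 mult_left_mono[OF u01(2), of "real lam"] by auto
        then show ?thesis using sR0 by linarith
      qed
      ultimately have "\<bar>d a - e' a\<bar> \<le> L" unfolding L_def using mpos by (simp add: divide_right_mono)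
      then have "\<bar>d a\<bar> \<le> \<bar>e' a\<bar> + L" by linarith
      moreover have "\<bar>e' a\<bar> \<le> 1" unfolding ee using u01 mu01' by linarith
      ultimately show ?thesis by blast
    qed
    define A0 where "A0 = (\<Sum>a\<in>F. pmf P a * \<bar>e' a\<bar>)"
    have A00: "0 \<le> A0" unfolding A0_def by (intro sum_nonneg) auto
    have A01: "A0 \<le> 1"
    proof -
      have "A0 \<le> (\<Sum>a\<in>F. pmf P a * 1)" unfolding A0_def using edge by (intro sum_mono mult_left_mono) auto
      then show ?thesis using P1 by simp
    qed
    have step2: "(\<Sum>a\<in>F. pmf P a * \<bar>d a\<bar>) \<le> A0 + L"
    proof -
      have "(\<Sum>a\<in>F. pmf P a * \<bar>d a\<bar>) \<le> (\<Sum>a\<in>F. pmf P a * (\<bar>e' a\<bar> + L))"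
        using edge by (intro sum_mono mult_left_mono) auto
      also have "\<dots> = A0 + L * (\<Sum>a\<in>F. pmf P a)"
        unfolding A0_def by (simp add: algebra_simps sum.distrib sum_distrib_left)
      finally show ?thesis using P1 by simp
    qed
    have J1: "A0^2 \<le> (\<Sum>a\<in>F. pmf P a * (e' a)^2)"
      unfolding A0_def by (rule jensen_sq) (use finF P1 in auto)
    have J2: "exp (\<Sum>a\<in>F. pmf P a * (2 * real n * (e' a)^2)) \<le> (\<Sum>a\<in>F. pmf P a * exp (2 * real n * (e' a)^2))"
      by (rule jensen_exp) (use finF P1 in auto)
    also have "\<dots> = Phi S" unfolding Phi_def e'_def ..
    also have "\<dots> \<le> c" by (rule PhiS)
    finally have "(\<Sum>a\<in>F. pmf P a * (2 * real n * (e' a)^2)) \<le> ln c"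
      using c0 by (metis ln_exp ln_le_cancel_iff exp_gt_zero)
    moreover have "(\<Sum>a\<in>F. pmf P a * (2 * real n * (e' a)^2)) = 2 * real n * (\<Sum>a\<in>F. pmf P a * (e' a)^2)"
      by (simp add: sum_distrib_left algebra_simps)
    ultimately have W: "2 * (real m - real lam) * A0^2 \<le> ln c"
      using J1 rn mult_left_mono[OF J1, of "2 * real n"] by simp
    have fa: "A0 + real lam / real m \<le> sqrt (1/(2*(real m - real lam)) * (4*real lam + ln c))"
      by (rule fin_ar) (use A00 A01 W assms(1) in auto)
    have "risk_D D R Q S - risk_S m R Q S \<le> A0 + L" using diff step1 step2 by linarith
    then show "risk_D D R Q S \<le> risk_S m R Q S
                + sqrt (1 / (2 * (real m - real lam)) * (4 * real lam + ln (xi (m - lam) / \<delta>)))"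
      using fa unfolding L_def c_def n_def by linarith
  qed
qed
end
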